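(* For all $a,b\in\mathbb{B}^n$, \[ \mathrm{th}\left(\frac{h_{\mathbb{B}^n}(a,b)}{4}\right)\ge\frac{|a-b|}{\sqrt{4-|a+b|^2}}. \] Equality holds if $a=-b$.
   Context: $\mathbb{B}^n$ is the unit ball of $\mathbb{R}^n$. Hilbert metric: for distinct $a,b$ in a bounded convex domain $G\subset\mathbb{R}^n$, let $u,v$ be the intersection points of the line through $a,b$ with $\partial G$, ordered $u,a,b,v$ on the line; $h_G(a,b)=\log\frac{|u-b||a-v|}{|u-a||b-v|}$, and $h_G(a,a)=0$. *)

theory Defs
  imports "HOL-Analysis.Analysis"
begin

text \<open>For distinct a, b the line through
  a and b meets the boundary of G in u and v, ordered u, a, b, v on the line:
  u = a + t (b - a) with t \<le> 0 and v = a + t (b - a) with t \<ge> 1.\<close>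
definition hilbert_metric :: "'a::euclidean_space set \<Rightarrow> 'a \<Rightarrow> 'a \<Rightarrow> real" where
  "hilbert_metric G a b =
     (if a = b then 0
      else let u = (THE u. u \<in> frontier G \<and> (\<exists>t::real. t \<le> 0 \<and> u = a + t *\<^sub>R (b - a)));
               v = (THE v. v \<in> frontier G \<and> (\<exists>t::real. t \<ge> 1 \<and> v = a + t *\<^sub>R (b - a)))
           in ln ((norm (u - b) * norm (a - v)) / (norm (u - a) * norm (b - v))))"

end

theory Submission
  imports Defs
begin

lemma tanh_ln_quarter:
  fixes R :: real assumes "R > 0"
  shows "tanh (ln R / 4) = (sqrt R - 1) / (sqrt R + 1)"
proof -
  have "exp (- 2 * (ln R / 4)) = exp (- (ln R / 2))" by simp
  also have "\<dots> = inverse (exp (ln R / 2))" by (simp add: exp_minus)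
  also have "exp (ln R / 2) = R powr (1/2)" using assms by (simp add: powr_def)
  also have "\<dots> = sqrt R" using assms by (simp add: powr_half_sqrt)
  finally have e: "exp (- 2 * (ln R / 4)) = inverse (sqrt R)" .
  have q: "sqrt R > 0" using assms by simp
  have RR: "R = sqrt R * sqrt R" using assms by simp
  have gen: "(1 - inverse s) / (1 + inverse s) = (s - 1) / (s + 1)" if "s > 0" for s :: real
  proof -
    have "(1 - inverse s) * s = s - 1" "(1 + inverse s) * s = s + 1" using that by (simp_all add: algebra_simps)
    moreover have "(1 - inverse s) / (1 + inverse s) = ((1 - inverse s) * s) / ((1 + inverse s) * s)"
      using that by simp
    ultimately show ?thesis by simp
  qed
  have "(1 - inverse (sqrt R)) / (1 + inverse (sqrt R)) = (sqrt R - 1) / (sqrt R + 1)"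
    using gen[OF q] .
  thus ?thesis unfolding tanh_real_altdef e .
qed

lemma key_ineq:
  fixes \<alpha> \<beta> :: real assumes "\<alpha> > 1" "\<beta> > 1"
  shows "(sqrt ((1+\<alpha>)*(1+\<beta>)/((\<alpha>-1)*(\<beta>-1))) - 1) / (sqrt ((1+\<alpha>)*(1+\<beta>)/((\<alpha>-1)*(\<beta>-1))) + 1)
         \<ge> 1 / sqrt (\<alpha>*\<beta>)"
proof -
  define g where "g = sqrt (\<alpha>*\<beta>)"
  define q where "q = sqrt ((1+\<alpha>)*(1+\<beta>)/((\<alpha>-1)*(\<beta>-1)))"
  have gg: "g^2 = \<alpha>*\<beta>" unfolding g_def using assms by simp
  have g1: "g > 1" unfolding g_def using assms
    by (metis less_1_mult real_sqrt_gt_1_iff)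
  have am: "\<alpha> + \<beta> \<ge> 2*g"
  proof -
    have "(sqrt \<alpha> - sqrt \<beta>)^2 \<ge> 0" by simp
    moreover have "g = sqrt \<alpha> * sqrt \<beta>" unfolding g_def by (simp add: real_sqrt_mult)
    ultimately show ?thesis using assms by (simp add: power2_eq_square algebra_simps)
  qed
  have diff: "(1+\<alpha>)*(1+\<beta>)*(g-1)^2 - (g+1)^2*(\<alpha>-1)*(\<beta>-1) = 2*(\<alpha>*\<beta>+1)*((\<alpha>+\<beta>) - 2*g)"
    using gg by (simp add: power2_eq_square algebra_simps)
  have "(2*(\<alpha>*\<beta>+1)*((\<alpha>+\<beta>) - 2*g)) \<ge> 0" using am assms by simp
  hence R: "((g+1)/(g-1))^2 \<le> (1+\<alpha>)*(1+\<beta>)/((\<alpha>-1)*(\<beta>-1))"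
    using diff g1 assms by (simp add: divide_simps power_divide)
  have "(g+1)/(g-1) \<le> q" unfolding q_def using R g1
    by (simp add: real_le_rsqrt)
  hence "g + 1 \<le> q * (g - 1)" using g1 by (simp add: divide_simps)
  moreover have "q \<ge> 0" unfolding q_def using assms by (intro real_sqrt_ge_zero) simp
  ultimately have "1 / g \<le> (q - 1) / (q + 1)" using g1
    by (simp add: divide_simps algebra_simps)
  thus ?thesis unfolding q_def g_def .
qed
lemma eq_case:
  fixes \<alpha> :: real assumes "\<alpha> > 1"
  shows "(sqrt ((1+\<alpha>)*(1+\<alpha>)/((\<alpha>-1)*(\<alpha>-1))) - 1) / (sqrt ((1+\<alpha>)*(1+\<alpha>)/((\<alpha>-1)*(\<alpha>-1))) + 1)
         = 1 / sqrt (\<alpha>*\<alpha>)"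
proof -
  have "(1+\<alpha>)*(1+\<alpha>)/((\<alpha>-1)*(\<alpha>-1)) = ((1+\<alpha>)/(\<alpha>-1))^2" by (simp add: power2_eq_square)
  hence s: "sqrt ((1+\<alpha>)*(1+\<alpha>)/((\<alpha>-1)*(\<alpha>-1))) = (1+\<alpha>)/(\<alpha>-1)" using assms by simp
  have s2: "sqrt (\<alpha>*\<alpha>) = \<alpha>" using assms by simp
  have "((1+\<alpha>)/(\<alpha>-1) - 1) = 2/(\<alpha>-1)" "((1+\<alpha>)/(\<alpha>-1) + 1) = 2*\<alpha>/(\<alpha>-1)" using assms by (simp_all add: field_simps)
  thus ?thesis unfolding s s2 using assms by (simp add: field_simps)
qed

lemma line_data:
  fixes a b :: "'a::euclidean_space"
  assumes "a \<in> ball 0 1" and "b \<in> ball 0 1" and "a \<noteq> b"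
  obtains \<alpha> \<beta> :: real where "\<alpha> > 1" "\<beta> > 1"
    "hilbert_metric (ball 0 1) a b = ln ((1+\<alpha>)*(1+\<beta>)/((\<alpha>-1)*(\<beta>-1)))"
    "norm (a - b) / sqrt (4 - (norm (a + b))\<^sup>2) = 1 / sqrt (\<alpha>*\<beta>)"
    "a = - b \<Longrightarrow> \<alpha> = \<beta>"
proof -
  define A where "A = (b-a) \<bullet> (b-a)"
  define B where "B = a \<bullet> (b-a)"
  define C where "C = a \<bullet> a - 1"
  define D where "D = B^2 - A*C"
  define t1 where "t1 = (-B - sqrt D)/A"
  define t2 where "t2 = (-B + sqrt D)/A"
  have "norm a < 1" "norm b < 1" using assms(1,2) by auto
  hence "(norm a)^2 < 1" "(norm b)^2 < 1" by (simp_all add: power_less_one_iff abs_square_less_1)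
  hence na: "a \<bullet> a < 1" and nb: "b \<bullet> b < 1" by (simp_all add: dot_square_norm)
  have A0: "A > 0" unfolding A_def using assms(3) by simp
  have C0: "C < 0" unfolding C_def using na by simp
  have D0: "D > B^2" unfolding D_def using A0 C0 by (simp add: mult_pos_neg)
  have sD: "sqrt D ^2 = D" using D0 by (smt (verit) real_sqrt_pow2 zero_le_power2)
  have sDB: "sqrt D > abs B" using D0 by (simp add: real_less_rsqrt)
  have E: "D - (A+B)^2 = - A * (b \<bullet> b - 1)"
    unfolding D_def A_def B_def C_def by (simp add: algebra_simps inner_commute power2_eq_square)
  have "A * (b \<bullet> b - 1) < 0" using A0 nb by (simp add: mult_pos_neg)
  hence "D > (A+B)^2" using E by linarith
  hence sDAB: "sqrt D > abs (A+B)" by (simp add: real_less_rsqrt)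
  have t1n: "t1 < 0" unfolding t1_def using sDB A0 by (simp add: divide_neg_pos)
  have t2g: "t2 > 1" unfolding t2_def using sDAB A0 by (simp add: less_divide_eq)
  have sum: "t1 + t2 = -2*B/A" unfolding t1_def t2_def using A0 by (simp add: field_simps)
  have prod: "t1 * t2 = C/A" unfolding t1_def t2_def using A0 sD
    by (simp add: field_simps D_def power2_eq_square algebra_simps)
  have nq: "(norm (a + t *\<^sub>R (b-a)))^2 = 1 + A*(t-t1)*(t-t2)" for t
  proof -
    have "(norm (a + t *\<^sub>R (b-a)))^2 = a \<bullet> a + 2*t*B + t^2*A"
      unfolding power2_norm_eq_inner A_def B_def by (simp add: algebra_simps inner_commute power2_eq_square)
    also have "\<dots> = 1 + C + 2*t*B + t^2*A" unfolding C_def by simp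
    also have "\<dots> = 1 + A*(t^2 - (t1+t2)*t + t1*t2)"
      unfolding sum prod using A0 by (simp add: field_simps power2_eq_square)
    also have "\<dots> = 1 + A*(t-t1)*(t-t2)" by (simp add: algebra_simps power2_eq_square)
    finally show ?thesis .
  qed
  have U: "(THE u. u \<in> frontier (ball 0 1) \<and> (\<exists>t::real. t \<le> 0 \<and> u = a + t *\<^sub>R (b - a))) = a + t1 *\<^sub>R (b-a)"
  proof (rule the_equality)
    have "norm (a + t1 *\<^sub>R (b-a)) = 1" using nq[of t1]
      by (simp add: power2_eq_1_iff) (smt (verit) norm_ge_zero)
    thus "a + t1 *\<^sub>R (b-a) \<in> frontier (ball 0 1) \<and> (\<exists>t::real. t \<le> 0 \<and> a + t1 *\<^sub>R (b-a) = a + t *\<^sub>R (b - a))"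
      using t1n by (auto intro!: exI[where x=t1])
  next
    fix u assume "u \<in> frontier (ball 0 (1::real)) \<and> (\<exists>t::real. t \<le> 0 \<and> u = a + t *\<^sub>R (b - a))"
    then obtain t where t: "t \<le> 0" "u = a + t *\<^sub>R (b - a)" "norm u = 1" by auto
    hence "A*(t-t1)*(t-t2) = 0" using nq[of t] by simp
    hence "t = t1" using A0 t t2g by auto
    thus "u = a + t1 *\<^sub>R (b-a)" using t by simp
  qed
  have V: "(THE v. v \<in> frontier (ball 0 1) \<and> (\<exists>t::real. t \<ge> 1 \<and> v = a + t *\<^sub>R (b - a))) = a + t2 *\<^sub>R (b-a)"
  proof (rule the_equality)
    have "norm (a + t2 *\<^sub>R (b-a)) = 1" using nq[of t2]
      by (simp add: power2_eq_1_iff) (smt (verit) norm_ge_zero)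
    thus "a + t2 *\<^sub>R (b-a) \<in> frontier (ball 0 1) \<and> (\<exists>t::real. t \<ge> 1 \<and> a + t2 *\<^sub>R (b-a) = a + t *\<^sub>R (b - a))"
      using t2g by (auto intro!: exI[where x=t2])
  next
    fix v assume "v \<in> frontier (ball 0 (1::real)) \<and> (\<exists>t::real. t \<ge> 1 \<and> v = a + t *\<^sub>R (b - a))"
    then obtain t where t: "t \<ge> 1" "v = a + t *\<^sub>R (b - a)" "norm v = 1" by auto
    hence "A*(t-t1)*(t-t2) = 0" using nq[of t] by simp
    hence "t = t2" using A0 t t1n by auto
    thus "v = a + t2 *\<^sub>R (b-a)" using t by simp
  qed
  define d where "d = norm (b - a)"
  have d0: "d > 0" unfolding d_def using assms(3) by simp
  have n1: "norm (a + t1 *\<^sub>R (b-a) - b) = (1-t1)*d"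
  proof -
    have "a + t1 *\<^sub>R (b-a) - b = (t1 - 1) *\<^sub>R (b-a)" by (simp add: algebra_simps)
    thus ?thesis unfolding d_def using t1n by simp
  qed
  have n2: "norm (a - (a + t2 *\<^sub>R (b-a))) = t2*d"
    unfolding d_def using t2g by simp
  have n3: "norm (a + t1 *\<^sub>R (b-a) - a) = (-t1)*d"
    unfolding d_def using t1n by simp
  have n4: "norm (b - (a + t2 *\<^sub>R (b-a))) = (t2-1)*d"
  proof -
    have "b - (a + t2 *\<^sub>R (b-a)) = (1 - t2) *\<^sub>R (b-a)" by (simp add: algebra_simps)
    thus ?thesis unfolding d_def using t2g by simp
  qed
  define \<alpha> where "\<alpha> = 1 - 2*t1"
  define \<beta> where "\<beta> = 2*t2 - 1"
  show ?thesis
  proof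
    show "\<alpha> > 1" "\<beta> > 1" unfolding \<alpha>_def \<beta>_def using t1n t2g by auto
    have "hilbert_metric (ball 0 1) a b = ln ((1-t1)*d * (t2*d) / ((-t1)*d * ((t2-1)*d)))"
      unfolding hilbert_metric_def U V Let_def n1 n2 n3 n4 using assms(3) by simp
    also have "(1-t1)*d * (t2*d) / ((-t1)*d * ((t2-1)*d)) = (1+\<alpha>)*(1+\<beta>)/((\<alpha>-1)*(\<beta>-1))"
      unfolding \<alpha>_def \<beta>_def using d0 t1n t2g by (simp add: field_simps)
    finally show "hilbert_metric (ball 0 1) a b = ln ((1+\<alpha>)*(1+\<beta>)/((\<alpha>-1)*(\<beta>-1)))" .
    have "\<alpha>*\<beta>*A = 2*(t1+t2)*A - A - 4*(t1*t2)*A" unfolding \<alpha>_def \<beta>_def by (simp add: algebra_simps)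
    also have "\<dots> = -4*B - A - 4*C" unfolding sum prod using A0 by simp
    also have "\<dots> = 4 - (norm (a+b))^2" unfolding power2_norm_eq_inner A_def B_def C_def
      by (simp add: algebra_simps inner_commute)
    finally have ab: "\<alpha>*\<beta>*A = 4 - (norm (a+b))^2" .
    have nA: "norm (a - b) = sqrt A" unfolding A_def by (metis norm_eq_sqrt_inner norm_minus_commute)
    show "norm (a - b) / sqrt (4 - (norm (a + b))\<^sup>2) = 1 / sqrt (\<alpha>*\<beta>)"
      unfolding nA ab[symmetric] using A0 by (simp add: real_sqrt_mult)
    assume "a = - b"
    hence "-2*B = A" unfolding A_def B_def by (simp add: algebra_simps inner_commute)
    hence "t1 + t2 = 1" unfolding sum using A0 by simp
    thus "\<alpha> = \<beta>" unfolding \<alpha>_def \<beta>_def by simp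
  qed
qed

theorem corollary3p8:
  fixes a b :: "'a::euclidean_space"
  assumes "a \<in> ball 0 1" and "b \<in> ball 0 1"
  shows "tanh (hilbert_metric (ball 0 1) a b / 4) \<ge> norm (a - b) / sqrt (4 - (norm (a + b))\<^sup>2)
         \<and> (a = - b \<longrightarrow> tanh (hilbert_metric (ball 0 1) a b / 4) = norm (a - b) / sqrt (4 - (norm (a + b))\<^sup>2))"
proof (cases "a = b")
  case True
  thus ?thesis unfolding hilbert_metric_def by simp
next
  case False
  obtain \<alpha> \<beta> where ab: "\<alpha> > 1" "\<beta> > 1"
    "hilbert_metric (ball 0 1) a b = ln ((1+\<alpha>)*(1+\<beta>)/((\<alpha>-1)*(\<beta>-1)))"
    "norm (a - b) / sqrt (4 - (norm (a + b))\<^sup>2) = 1 / sqrt (\<alpha>*\<beta>)"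
    "a = - b \<Longrightarrow> \<alpha> = \<beta>"
    using line_data[OF assms False] by blast
  have R0: "(1+\<alpha>)*(1+\<beta>)/((\<alpha>-1)*(\<beta>-1)) > 0" using ab by simp
  show ?thesis
    unfolding ab(3,4) tanh_ln_quarter[OF R0]
    using key_ineq[OF ab(1,2)] eq_case[OF ab(1)] ab(5) by auto
qed

end
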